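(* Let $\Pi$ be a Lévy measure on $\mathbb{R}^d$ supported by the unit ball $D=\{y:|y|\le1\}$. Let $b:[0,1]\to[0,1]$ be continuous and increasing with $b(1)=1$ and $b(t)/t\to\infty$ as $t\to0$, and assume that on some interval $[0,t_0]$: (i) $b(t)/t^\rho$ is non-decreasing for some $\rho>1/3$; (ii) for every $\varepsilon>0$ there is $0<\delta_\varepsilon<t_0$ with $b(s)/b(t)\ge(1-\varepsilon)s/t$ for $0\le s\le t\le\delta_\varepsilon$. If $\int_0^1\overline{\Pi}(b(t))\,dt<\infty$, then: (a) $\int_0^1\frac{1}{b(t)^3}\int_{0<|y|\le b(t)}|y|^3\,\Pi(dy)\,dt<\infty$; (b) $\int_0^1\overline{\Pi}(\varepsilon b(t))\,dt<\infty$ for every $0<\varepsilon<1$; (c) $\frac{t}{b(t)}\int_{b(t)<|y|\le1}|y|\,\Pi(dy)\to0$ as $t\to0$.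
   Context: $\Pi$ is a Lévy measure ($\Pi(\{0\})=0$, $\int(1\wedge|y|^2)\Pi(dy)<\infty$), $|\cdot|$ the Euclidean norm, $\overline{\Pi}(x)=\Pi\{y:|y|>x\}$. *)

theory Defs
  imports "HOL-Analysis.Analysis"
begin

definition levy_measure :: "'a::euclidean_space measure \<Rightarrow> bool" where
  "levy_measure M \<longleftrightarrow> sets M = sets borel \<and> emeasure M {0} = 0 \<and>
     (\<integral>\<^sup>+ y. ennreal (min 1 (norm y ^ 2)) \<partial>M) < \<infinity>"

definition levy_tail :: "'a::euclidean_space measure \<Rightarrow> real \<Rightarrow> ennreal" where
  "levy_tail M x = emeasure M {y. norm y > x}"

end

theory Submission
  imports Defs
begin

locale L3 =
  fixes M :: "'a::euclidean_space measure" and b :: "real \<Rightarrow> real" and t0 :: real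
  assumes levy: "levy_measure M"
    and supp: "emeasure M {y. norm y > 1} = 0"
    and b_cont: "continuous_on {0..1} b"
    and b_range: "b ` {0..1} \<subseteq> {0..1}"
    and b_mono: "mono_on {0..1} b"
    and b_1: "b 1 = 1"
    and b_lim: "filterlim (\<lambda>t. b t / t) at_top (at_right 0)"
    and t0: "0 < t0" "t0 \<le> 1"
    and cond_i: "\<exists>\<rho>>1/3. mono_on {0<..t0} (\<lambda>t. b t / t powr \<rho>)"
    and cond_ii: "\<forall>\<epsilon>>0. \<exists>\<delta>. 0 < \<delta> \<and> \<delta> < t0 \<and>
                    (\<forall>s t. 0 \<le> s \<and> s \<le> t \<and> t \<le> \<delta> \<longrightarrow> b s / b t \<ge> (1 - \<epsilon>) * s / t)"
    and int_fin: "(\<integral>\<^sup>+ t\<in>{0..1}. levy_tail M (b t) \<partial>lborel) < \<infinity>"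
begin

lemma sM: "sets M = sets borel" using levy unfolding levy_measure_def by auto
lemma spM: "space M = UNIV" using sets_eq_imp_space_eq[OF sM] by simp
lemma M0: "emeasure M {0} = 0" using levy unfolding levy_measure_def by auto
lemma Mfin: "(\<integral>\<^sup>+ y. ennreal (min 1 (norm y ^ 2)) \<partial>M) < \<infinity>" using levy unfolding levy_measure_def by auto

lemma bnn: "t \<in> {0..1} \<Longrightarrow> 0 \<le> b t \<and> b t \<le> 1" using b_range by (auto simp: image_subset_iff)

lemma bmono: "0 \<le> s \<Longrightarrow> s \<le> t \<Longrightarrow> t \<le> 1 \<Longrightarrow> b s \<le> b t"
  using b_mono unfolding mono_on_def by auto

lemma bpos_near: "\<exists>e>0. \<forall>t. 0 < t \<and> t < e \<longrightarrow> t < b t"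
proof -
  have "eventually (\<lambda>t. b t / t > 1) (at_right 0)"
    using b_lim by (simp add: filterlim_at_top_dense)
  then obtain e where e: "e > 0" "\<And>t. 0 < t \<Longrightarrow> t < e \<Longrightarrow> b t / t > 1"
    unfolding eventually_at_right_field by auto
  show ?thesis using e by (intro exI[of _ e]) (auto simp: field_simps)
qed

lemma bpos: "0 < t \<Longrightarrow> t \<le> 1 \<Longrightarrow> 0 < b t"
proof -
  assume t: "0 < t" "t \<le> 1"
  obtain e where e: "e > 0" "\<And>t. 0 < t \<Longrightarrow> t < e \<Longrightarrow> t < b t" using bpos_near by auto
  define u where "u = min t (e/2)"
  have "0 < u" "u < e" "u \<le> t" using t e unfolding u_def by auto
  then have "u < b u" using e by auto
  moreover have "b u \<le> b t" using \<open>0<u\<close> \<open>u \<le> t\<close> t by (intro bmono) auto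
  ultimately show ?thesis using \<open>0<u\<close> by linarith
qed


definition rho where "rho = (SOME \<rho>. \<rho> > 1/3 \<and> mono_on {0<..t0} (\<lambda>t. b t / t powr \<rho>))"
lemma rho: "rho > 1/3" "mono_on {0<..t0} (\<lambda>t. b t / t powr rho)"
  using someI_ex[OF cond_i] unfolding rho_def by auto

lemma rho_ineq: "0 < s \<Longrightarrow> s \<le> t \<Longrightarrow> t \<le> t0 \<Longrightarrow> b t \<ge> b s * (t / s) powr rho"
proof -
  assume st: "0 < s" "s \<le> t" "t \<le> t0"
  have "b s / s powr rho \<le> b t / t powr rho" using rho(2) st unfolding mono_on_def by auto
  then have "b s * t powr rho \<le> b t * s powr rho" using st by (simp add: field_simps)
  then show ?thesis using st by (simp add: field_simps powr_divide)
qed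

lemma b0: "b 0 = 0"
proof -
  have lim1: "((\<lambda>t. b t0 * (t / t0) powr rho) \<longlongrightarrow> b t0 * (0 / t0) powr rho) (at_right 0)"
  proof -
    have ev: "\<forall>\<^sub>F x in at_right 0. 0 \<le> x / t0"
      using t0 unfolding eventually_at_right_field by (intro exI[of _ 1]) auto
    show ?thesis using rho t0 ev by (intro tendsto_intros) auto
  qed
  have "eventually (\<lambda>t. b 0 \<le> b t0 * (t / t0) powr rho) (at_right 0)"
    unfolding eventually_at_right_field
  proof (intro exI[of _ t0] conjI allI impI)
    fix t assume t: "0 < t" "t < t0"
    have "b 0 \<le> b t" using t t0 by (intro bmono) auto
    also have "b t \<le> b t0 * (t / t0) powr rho"
      using rho_ineq[of t t0] t t0 bpos[of t] by (simp add: field_simps powr_divide)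
    finally show "b 0 \<le> b t0 * (t / t0) powr rho" .
  qed (use t0 in auto)
  then have "b 0 \<le> b t0 * (0 / t0) powr rho"
    by (intro tendsto_lowerbound[OF lim1]) auto
  then show ?thesis using bnn[of 0] by simp
qed


lemma measM: "f \<in> borel_measurable borel \<Longrightarrow> f \<in> borel_measurable M"
  using measurable_cong_sets[OF sM refl] by blast

lemma open_sets_M: "open A \<Longrightarrow> A \<in> sets M" by (simp add: sM)

lemma tail_set_M: "{y. c < norm y} \<in> sets M"
  by (intro open_sets_M open_Collect_less continuous_intros)

lemma tail_fin: assumes c: "0 < c" "c \<le> 1" shows "emeasure M {y. c < norm y} < \<infinity>"
proof -
  have "emeasure M {y. c < norm y} = (\<integral>\<^sup>+ y. indicator {y. c < norm y} y \<partial>M)"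
    using tail_set_M by simp
  also have "\<dots> \<le> (\<integral>\<^sup>+ y. ennreal (1 / c^2) * ennreal (min 1 (norm y ^ 2)) \<partial>M)"
  proof (intro nn_integral_mono)
    fix y
    show "indicator {y. c < norm y} y \<le> ennreal (1 / c^2) * ennreal (min 1 (norm y ^ 2))"
    proof (cases "c < norm y")
      case True
      have "c^2 \<le> norm y ^ 2" using True c by (intro power_mono) auto
      moreover have "c^2 \<le> 1" using c by (simp add: power_le_one)
      ultimately have "c^2 \<le> min 1 (norm y ^ 2)" by simp
      then have "1 \<le> (1 / c^2) * min 1 (norm y ^ 2)" using c
        by (auto simp: field_simps min_def)
      then show ?thesis using True c by (simp add: ennreal_mult[symmetric] ennreal_1[symmetric] del: ennreal_1)
    qed simp
  qed
  also have "\<dots> = ennreal (1 / c^2) * (\<integral>\<^sup>+ y. ennreal (min 1 (norm y ^ 2)) \<partial>M)"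
    by (intro nn_integral_cmult) (auto intro!: measM)
  also have "\<dots> < \<infinity>" using Mfin by (simp add: ennreal_mult_less_top)
  finally show ?thesis .
qed

lemma sigma_fin: "sigma_finite_measure M"
proof
  let ?A = "insert {0} (range (\<lambda>n::nat. {y::'a. 1 / Suc n < norm y}))"
  have "y \<in> \<Union>?A" for y :: 'a
  proof (cases "y = 0")
    case False
    then have "norm y > 0" by simp
    then obtain n where "inverse (real (Suc n)) < norm y" using reals_Archimedean by blast
    then have "1 / Suc n < norm y" by (simp add: inverse_eq_divide)
    then show ?thesis by blast
  qed auto
  then have "\<Union>?A = UNIV" by blast
  moreover have "?A \<subseteq> sets M" using tail_set_M by (auto simp: sM)
  moreover have "\<forall>a\<in>?A. emeasure M a \<noteq> \<infinity>"
  proof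
    fix a assume "a \<in> ?A"
    then consider "a = {0}" | n::nat where "a = {y. 1 / Suc n < norm y}" by auto
    then show "emeasure M a \<noteq> \<infinity>"
    proof cases
      case 1 then show ?thesis using M0 by simp
    next
      case 2
      have "emeasure M {y. 1 / Suc n < norm y} < \<infinity>" by (rule tail_fin) auto
      then show ?thesis using 2 by simp
    qed
  qed
  ultimately show "\<exists>A::'a set set. countable A \<and> A \<subseteq> sets M \<and> (\<Union>A) = space M \<and> (\<forall>a\<in>A. emeasure M a \<noteq> \<infinity>)"
    by (intro exI[of _ ?A]) (auto simp: spM)
qed


lemma tonelli:
  assumes "(\<lambda>(t,y). f t y) \<in> borel_measurable (lborel \<Otimes>\<^sub>M M)"
  shows "(\<integral>\<^sup>+ y. (\<integral>\<^sup>+ t. f t y \<partial>lborel) \<partial>M) = (\<integral>\<^sup>+ t. (\<integral>\<^sup>+ y. f t y \<partial>M) \<partial>lborel)"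
proof -
  interpret sigma_finite_measure M by (rule sigma_fin)
  interpret pair_sigma_finite lborel M by (intro pair_sigma_finite.intro) (simp_all add: lborel.sigma_finite_measure_axioms sigma_finite_measure_axioms)
  show ?thesis using Fubini'[OF assms] .
qed

definition bb where "bb t = indicator {0..1} t * b t"

lemma bb_eq: "t \<in> {0..1} \<Longrightarrow> bb t = b t" by (simp add: bb_def)

lemma bb_meas[measurable]: "bb \<in> borel_measurable lborel"
proof -
  have "(\<lambda>x. indicator {0..1} x *\<^sub>R b x) \<in> borel_measurable borel"
    by (intro borel_measurable_continuous_on_indicator b_cont) auto
  then show ?thesis unfolding bb_def by simp
qed

lemma norm_meas[measurable]: "(\<lambda>y. norm y) \<in> borel_measurable M"
  by (intro measM) simp

definition S where "S r = {t\<in>{0..1}. b t < r}"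
definition G where "G r = measure lborel (S r)"

lemma S_alt: "S r = {t. bb t < r} \<inter> {0..1}" unfolding S_def by (auto simp: bb_eq)
lemma S_sets[measurable]: "S r \<in> sets lborel" unfolding S_alt by measurable

lemma S_emeasure: "emeasure lborel (S r) = ennreal (G r)"
proof -
  have "emeasure lborel (S r) \<le> emeasure lborel {0..1::real}"
    by (intro emeasure_mono) (auto simp: S_def)
  then have "emeasure lborel (S r) \<noteq> \<infinity>" by (auto simp: top_unique)
  then show ?thesis unfolding G_def by (simp add: emeasure_eq_ennreal_measure)
qed

lemma G_nn: "0 \<le> G r" unfolding G_def by simp

lemma G_mono: "r \<le> r' \<Longrightarrow> G r \<le> G r'"
proof -
  assume "r \<le> r'"
  then have "emeasure lborel (S r) \<le> emeasure lborel (S r')"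
    by (intro emeasure_mono[OF _ S_sets]) (auto simp: S_def)
  then show ?thesis using G_nn by (simp add: S_emeasure)
qed

lemma G_le1: "G r \<le> 1"
proof -
  have "emeasure lborel (S r) \<le> emeasure lborel {0..1::real}"
    by (intro emeasure_mono) (auto simp: S_def)
  then show ?thesis by (simp add: S_emeasure)
qed

lemma G_lower: "0 \<le> s \<Longrightarrow> s \<le> 1 \<Longrightarrow> b s < r \<Longrightarrow> s \<le> G r"
proof -
  assume s: "0 \<le> s" "s \<le> 1" "b s < r"
  have "{0..s} \<subseteq> S r" using s bmono[of _ s] by (force simp: S_def)
  then have "emeasure lborel {0..s} \<le> emeasure lborel (S r)" by (intro emeasure_mono[OF _ S_sets])
  then show ?thesis using s G_nn by (simp add: S_emeasure)
qed

lemma s_exists: "0 < r \<Longrightarrow> r \<le> 1 \<Longrightarrow> \<exists>s. 0 < s \<and> s \<le> 1 \<and> b s = r/2 \<and> s \<le> G r"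
proof -
  assume r: "0 < r" "r \<le> 1"
  obtain s where s: "0 \<le> s" "s \<le> 1" "b s = r/2"
    using IVT'[of b 0 "r/2" 1] b0 b_1 r b_cont by auto
  have "s \<noteq> 0" using s r b0 by auto
  moreover have "s \<le> G r" using s r by (intro G_lower) auto
  ultimately show ?thesis using s by (intro exI[of _ s]) auto
qed

lemma G_meas[measurable]: "(\<lambda>y. G (norm y)) \<in> borel_measurable M"
proof -
  have "G \<in> borel_measurable borel" by (intro borel_measurable_mono) (auto simp: mono_def G_mono)
  then have "(\<lambda>y. G (norm y)) \<in> borel_measurable borel" by measurable
  then show ?thesis by (rule measM)
qed

lemma Gint_eq: "(\<integral>\<^sup>+ y. ennreal (G (norm y)) \<partial>M) = (\<integral>\<^sup>+ t\<in>{0..1}. levy_tail M (b t) \<partial>lborel)"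
proof -
  let ?f = "\<lambda>t y. indicator {0..1} t * (if bb t < norm y then 1 else 0 :: ennreal)"
  have meas: "(\<lambda>(t,y). ?f t y) \<in> borel_measurable (lborel \<Otimes>\<^sub>M M)" by measurable
  have "(\<integral>\<^sup>+ y. ennreal (G (norm y)) \<partial>M) = (\<integral>\<^sup>+ y. (\<integral>\<^sup>+ t. ?f t y \<partial>lborel) \<partial>M)"
  proof (intro nn_integral_cong)
    fix y :: 'a
    have "(\<integral>\<^sup>+ t. ?f t y \<partial>lborel) = (\<integral>\<^sup>+ t. indicator (S (norm y)) t \<partial>lborel)"
      by (intro nn_integral_cong) (auto simp: S_alt indicator_def)
    also have "\<dots> = ennreal (G (norm y))" by (subst nn_integral_indicator[OF S_sets]) (rule S_emeasure)
    finally show "ennreal (G (norm y)) = (\<integral>\<^sup>+ t. ?f t y \<partial>lborel)" ..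
  qed
  also have "\<dots> = (\<integral>\<^sup>+ t. (\<integral>\<^sup>+ y. ?f t y \<partial>M) \<partial>lborel)" by (rule tonelli[OF meas])
  also have "\<dots> = (\<integral>\<^sup>+ t\<in>{0..1}. levy_tail M (b t) \<partial>lborel)"
  proof (intro nn_integral_cong)
    fix t :: real
    show "(\<integral>\<^sup>+ y. ?f t y \<partial>M) = levy_tail M (b t) * indicator {0..1} t"
    proof (cases "t \<in> {0..1}")
      case True
      have "(\<integral>\<^sup>+ y. ?f t y \<partial>M) = (\<integral>\<^sup>+ y. indicator {y. b t < norm y} y \<partial>M)"
        using True by (intro nn_integral_cong) (auto simp: bb_eq indicator_def)
      also have "\<dots> = levy_tail M (b t)" using tail_set_M by (simp add: levy_tail_def)
      finally show ?thesis using True by simp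
    qed simp
  qed
  finally show ?thesis .
qed

lemma Gint: "(\<integral>\<^sup>+ y. ennreal (G (norm y)) \<partial>M) < \<infinity>" using Gint_eq int_fin by simp

end

lemma powr_tail_int:
  fixes s T a :: real
  assumes s: "0 < s" "s \<le> T" and a: "a > 1"
  shows "(\<integral>\<^sup>+ t. ennreal (indicator {s..T} t * (s/t) powr a) \<partial>lborel) \<le> ennreal (s/(a-1))"
proof -
  define H where "H t = - (s powr a) * t powr (1-a) / (a-1)" for t
  have der: "(H has_real_derivative (s/t) powr a) (at t)" if t: "t > 0" for t
  proof -
    have "((\<lambda>t. t powr (1-a)) has_real_derivative (1-a) * t powr (1-a-1)) (at t)"
      by (rule has_real_derivative_powr[OF t])
    then have "((\<lambda>t. - (s powr a) / (a-1) * t powr (1-a)) has_real_derivative - (s powr a) / (a-1) * ((1-a) * t powr (1-a-1))) (at t)"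
      by (rule DERIV_cmult)
    moreover have "- (s powr a) / (a-1) * ((1-a) * t powr (1-a-1)) = (s/t) powr a"
    proof -
      have "t powr (1-a-1) = 1 / t powr a" using t by (simp add: powr_minus_divide)
      moreover have "(s/t) powr a = s powr a / t powr a" using s t by (simp add: powr_divide)
      moreover have "t powr a > 0" using t by simp
      moreover have alg: "\<And>S P. P > 0 \<Longrightarrow> - S / (a-1) * ((1-a) * (1/P)) = S/P"
      proof -
        fix S P :: real assume "P > 0"
        have "(1-a) = - (a-1)" by simp
        show "- S / (a-1) * ((1-a) * (1/P)) = S/P" using a \<open>P > 0\<close> by (simp add: field_simps)
      qed
      ultimately show ?thesis by simp
    qed
    ultimately show ?thesis unfolding H_def by (simp add: field_simps)
  qed
  have "((\<lambda>t. (s/t) powr a) has_integral (H T - H s)) {s..T}"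
  proof (rule fundamental_theorem_of_calculus)
    fix t assume "t \<in> {s..T}"
    then have "t > 0" using s by auto
    then show "(H has_vector_derivative (s/t) powr a) (at t within {s..T})"
      using der has_field_derivative_at_within has_real_derivative_iff_has_vector_derivative by blast
  qed (use s in auto)
  then have "(\<integral>\<^sup>+ t. ennreal (indicator {s..T} t * (s/t) powr a) \<partial>lborel) = ennreal (H T - H s)"
    by (intro nn_integral_has_integral_lebesgue) auto
  also have "\<dots> \<le> ennreal (s/(a-1))"
  proof (intro ennreal_leI)
    have "s powr a * s powr (1-a) = s" using s by (simp add: powr_add[symmetric])
    have "H T - H s = (s powr a * s powr (1-a) - s powr a * T powr (1-a)) / (a-1)"
      unfolding H_def by (simp add: diff_divide_distrib)
    also have "\<dots> = (s - s powr a * T powr (1-a)) / (a-1)" using \<open>s powr a * s powr (1-a) = s\<close> by simp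
    also have "\<dots> \<le> s / (a-1)" using a by (intro divide_right_mono) auto
    finally show "H T - H s \<le> s/(a-1)" .
  qed
  finally show ?thesis .
qed

context L3 begin

lemma tail_swap:
  "(\<integral>\<^sup>+ t\<in>{0..1}. levy_tail M (c * b t) \<partial>lborel) = (\<integral>\<^sup>+ y. emeasure lborel {t\<in>{0..1}. c * b t < norm y} \<partial>M)"
proof -
  let ?f = "\<lambda>t y. indicator {0..1} t * (if c * bb t < norm y then 1 else 0 :: ennreal)"
  have meas: "(\<lambda>(t,y). ?f t y) \<in> borel_measurable (lborel \<Otimes>\<^sub>M M)" by measurable
  have sets: "{t\<in>{0..1}. c * b t < r} \<in> sets lborel" for r
  proof -
    have "{t\<in>{0..1}. c * b t < r} = {t. c * bb t < r} \<inter> {0..1}" by (auto simp: bb_eq)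
    also have "\<dots> \<in> sets lborel" by measurable
    finally show ?thesis .
  qed
  have "(\<integral>\<^sup>+ y. emeasure lborel {t\<in>{0..1}. c * b t < norm y} \<partial>M) = (\<integral>\<^sup>+ y. (\<integral>\<^sup>+ t. ?f t y \<partial>lborel) \<partial>M)"
  proof (intro nn_integral_cong)
    fix y :: 'a
    have "(\<integral>\<^sup>+ t. ?f t y \<partial>lborel) = (\<integral>\<^sup>+ t. indicator {t\<in>{0..1}. c * b t < norm y} t \<partial>lborel)"
      by (intro nn_integral_cong) (auto simp: bb_eq indicator_def)
    also have "\<dots> = emeasure lborel {t\<in>{0..1}. c * b t < norm y}" by (rule nn_integral_indicator[OF sets])
    finally show "emeasure lborel {t\<in>{0..1}. c * b t < norm y} = (\<integral>\<^sup>+ t. ?f t y \<partial>lborel)" ..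
  qed
  also have "\<dots> = (\<integral>\<^sup>+ t. (\<integral>\<^sup>+ y. ?f t y \<partial>M) \<partial>lborel)" by (rule tonelli[OF meas])
  also have "\<dots> = (\<integral>\<^sup>+ t\<in>{0..1}. levy_tail M (c * b t) \<partial>lborel)"
  proof (intro nn_integral_cong)
    fix t :: real
    show "(\<integral>\<^sup>+ y. ?f t y \<partial>M) = levy_tail M (c * b t) * indicator {0..1} t"
    proof (cases "t \<in> {0..1}")
      case True
      have "(\<integral>\<^sup>+ y. ?f t y \<partial>M) = (\<integral>\<^sup>+ y. indicator {y. c * b t < norm y} y \<partial>M)"
        using True by (intro nn_integral_cong) (auto simp: bb_eq indicator_def)
      also have "\<dots> = levy_tail M (c * b t)" using tail_set_M by (simp add: levy_tail_def)
      finally show ?thesis using True by simp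
    qed simp
  qed
  finally show ?thesis ..
qed

lemma AE_le1: "AE y in M. norm y \<le> 1"
  by (rule AE_I'[of "{y. norm y > 1}"]) (auto simp: supp tail_set_M null_sets_def)

lemma partb_pt:
  assumes e: "0 < e" "e < 1" and r: "0 < r" "r \<le> 1"
  shows "emeasure lborel {t\<in>{0..1}. e * b t < r} \<le> ennreal (((2/e) powr (1/rho)) / t0 * G r)"
proof -
  define L where "L = (2/e) powr (1/rho)"
  have rho0: "rho > 0" using rho by simp
  have L1: "L \<ge> 1" unfolding L_def using e rho0 by (intro ge_one_powr_ge_zero) auto
  have LL: "L powr rho = 2/e" unfolding L_def using e rho0 by (simp add: powr_powr)
  obtain s where s: "0 < s" "s \<le> 1" "b s = r/2" "s \<le> G r" using s_exists r by blast
  have sets: "{t\<in>{0..1}. e * b t < r} \<in> sets lborel"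
  proof -
    have "{t\<in>{0..1}. e * b t < r} = {t. e * bb t < r} \<inter> {0..1}" by (auto simp: bb_eq)
    also have "\<dots> \<in> sets lborel" by measurable
    finally show ?thesis .
  qed
  show ?thesis
  proof (cases "s \<ge> t0 / L")
    case True
    have "emeasure lborel {t\<in>{0..1}. e * b t < r} \<le> emeasure lborel {0..1::real}"
      by (intro emeasure_mono) auto
    also have "\<dots> = ennreal 1" by simp
    also have "\<dots> \<le> ennreal (L / t0 * G r)"
    proof (intro ennreal_leI)
      have "1 \<le> L * s / t0" using True t0 L1 by (simp add: field_simps)
      also have "\<dots> \<le> L / t0 * G r" using s t0 L1 by (simp add: field_simps mult_left_mono)
      finally show "1 \<le> L / t0 * G r" .
    qed
    finally show ?thesis unfolding L_def .
  next
    case False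
    then have sL: "L * s < t0" using L1 by (simp add: field_simps)
    have sub: "{t\<in>{0..1}. e * b t < r} \<subseteq> {0 .. L * s}"
    proof (rule subsetI, rule ccontr)
      fix t assume t: "t \<in> {t\<in>{0..1}. e * b t < r}" "t \<notin> {0 .. L * s}"
      then have tL: "t > L * s" "0 \<le> t" "t \<le> 1" "e * b t < r" by auto
      define u where "u = min t t0"
      have u: "u > L * s" "s \<le> u" "u \<le> t0" "u \<le> t"
      proof -
        have "s \<le> L * s" using L1 s by simp
        then show "u > L * s" "s \<le> u" "u \<le> t0" "u \<le> t"
          using tL sL unfolding u_def by auto
      qed
      have "u / s > L" using u s by (simp add: field_simps)
      then have "(u/s) powr rho > L powr rho" using rho0 L1 by (intro powr_less_mono2) auto
      then have "(u/s) powr rho > 2/e" using LL by simp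
      have "b u \<ge> b s * (u / s) powr rho" using rho_ineq[of s u] u s by auto
      moreover have "b u \<le> b t" using u t0 tL s by (intro bmono) auto
      ultimately have "b t \<ge> r/2 * (u/s) powr rho" using s by simp
      moreover have "r/2 * (u/s) powr rho > r/2 * (2/e)"
        using \<open>(u/s) powr rho > 2/e\<close> r by (intro mult_strict_left_mono) auto
      ultimately have "b t > r/2 * (2/e)" by linarith
      then have "b t > r / e" by simp
      then have "e * b t > r" using e by (simp add: field_simps)
      then show False using tL by linarith
    qed
    have "emeasure lborel {t\<in>{0..1}. e * b t < r} \<le> emeasure lborel {0 .. L * s}"
      by (intro emeasure_mono[OF sub]) auto
    also have "\<dots> = ennreal (L * s)" using L1 s by simp
    also have "\<dots> \<le> ennreal (L / t0 * G r)"
    proof (intro ennreal_leI)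
      have "L * s \<le> L * s / t0" using t0 L1 s by (simp add: field_simps mult_le_cancel_left1)
      also have "\<dots> \<le> L / t0 * G r" using s t0 L1 by (simp add: field_simps mult_left_mono)
      finally show "L * s \<le> L / t0 * G r" .
    qed
    finally show ?thesis unfolding L_def .
  qed
qed

lemma partb: assumes e: "0 < e" "e < 1"
  shows "(\<integral>\<^sup>+ t\<in>{0..1}. levy_tail M (e * b t) \<partial>lborel) < \<infinity>"
proof -
  define K where "K = ((2/e) powr (1/rho)) / t0"
  have K: "K \<ge> 0" unfolding K_def using t0 by simp
  have "(\<integral>\<^sup>+ t\<in>{0..1}. levy_tail M (e * b t) \<partial>lborel) = (\<integral>\<^sup>+ y. emeasure lborel {t\<in>{0..1}. e * b t < norm y} \<partial>M)"
    by (rule tail_swap)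
  also have "\<dots> \<le> (\<integral>\<^sup>+ y. ennreal K * ennreal (G (norm y)) \<partial>M)"
  proof (intro nn_integral_mono_AE)
    show "AE y in M. emeasure lborel {t\<in>{0..1}. e * b t < norm y} \<le> ennreal K * ennreal (G (norm y))"
      using AE_le1
    proof eventually_elim
      fix y :: 'a assume y: "norm y \<le> 1"
      show "emeasure lborel {t\<in>{0..1}. e * b t < norm y} \<le> ennreal K * ennreal (G (norm y))"
      proof (cases "y = 0")
        case True
        have "{t\<in>{0..1}. e * b t < norm y} = {}" using True bnn e by (auto intro: mult_nonneg_nonneg simp: not_less)
        then show ?thesis by (metis emeasure_empty zero_le)
      next
        case False
        then show ?thesis using partb_pt[OF e, of "norm y"] y K G_nn unfolding K_def
          by (simp add: ennreal_mult[symmetric])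
      qed
    qed
  qed
  also have "\<dots> = ennreal K * (\<integral>\<^sup>+ y. ennreal (G (norm y)) \<partial>M)"
    by (intro nn_integral_cmult) measurable
  also have "\<dots> < \<infinity>" using Gint by (simp add: ennreal_mult_less_top)
  finally show ?thesis .
qed

end
context L3 begin

definition C1 where "C1 = max (8 / (3*rho - 1)) (1/t0)"
definition C2 where "C2 = 1 / b t0 ^ 3"

lemma bt0: "b t0 > 0" using bpos t0 by auto
lemma C1_ge: "8 / (3*rho - 1) \<le> C1" "1/t0 \<le> C1" unfolding C1_def by auto
lemma C1_nn: "0 \<le> C1" using C1_ge(2) t0 by (smt (verit) divide_nonneg_nonneg)
lemma C2_nn: "0 \<le> C2" unfolding C2_def using bt0 by simp

lemma parta_pt:
  assumes r: "0 < r" "r \<le> 1"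
  shows "(\<integral>\<^sup>+ t. indicator {0..1} t * ennreal (1 / b t ^ 3) * (if r \<le> b t then ennreal (r^3) else 0) \<partial>lborel)
          \<le> ennreal (C1 * G r + C2 * r^3)"
proof -
  obtain s where s: "0 < s" "s \<le> 1" "b s = r/2" "s \<le> G r" using s_exists r by blast
  have key: "indicator {0..1} t * ennreal (1 / b t ^ 3) * (if r \<le> b t then ennreal (r^3) else 0)
       = (if t \<in> {0..1} \<and> r \<le> b t then ennreal (r^3 / b t ^ 3) else 0)" for t
  proof (cases "t \<in> {0..1} \<and> r \<le> b t")
    case True
    then have "b t > 0" using r by auto
    then show ?thesis using True r by (simp add: ennreal_mult[symmetric] field_simps)
  qed auto
  have le1: "r^3 / b t ^ 3 \<le> 1" if "r \<le> b t" for t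
  proof -
    have "r^3 \<le> b t ^ 3" using that r by (intro power_mono) auto
    then show ?thesis using r that by (simp add: divide_le_eq_1)
  qed
  have ts: "t > s" if "t \<in> {0..1}" "r \<le> b t" for t
  proof (rule ccontr)
    assume "\<not> t > s"
    then have "b t \<le> b s" using that s by (intro bmono) auto
    then show False using that s r by auto
  qed
  show ?thesis
  proof (cases "s > t0")
    case True
    have "(\<integral>\<^sup>+ t. indicator {0..1} t * ennreal (1 / b t ^ 3) * (if r \<le> b t then ennreal (r^3) else 0) \<partial>lborel)
        \<le> (\<integral>\<^sup>+ t. indicator {0..1::real} t \<partial>lborel)"
      unfolding key by (intro nn_integral_mono) (auto simp: le1)
    also have "\<dots> = ennreal 1" by simp
    also have "\<dots> \<le> ennreal (C1 * G r + C2 * r^3)"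
    proof (intro ennreal_leI)
      have "1 \<le> G r / t0" using True s t0 by (simp add: field_simps)
      also have "\<dots> = (1/t0) * G r" by simp
      also have "\<dots> \<le> C1 * G r" using C1_ge G_nn by (intro mult_right_mono) auto
      also have "\<dots> \<le> C1 * G r + C2 * r^3" using C2_nn r by simp
      finally show "1 \<le> C1 * G r + C2 * r^3" .
    qed
    finally show ?thesis .
  next
    case False
    have rho3: "3 * rho > 1" using rho by simp
    have pt: "(if t \<in> {0..1} \<and> r \<le> b t then ennreal (r^3 / b t ^ 3) else 0)
        \<le> ennreal 8 * ennreal (indicator {s..t0} t * (s/t) powr (3*rho)) + ennreal (C2 * r^3) * indicator {0..1} t" for t
    proof (cases "t \<in> {0..1} \<and> r \<le> b t")
      case True
      then have tsx: "t > s" using ts by auto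
      show ?thesis
      proof (cases "t \<le> t0")
        case tt0: True
        define q where "q = (t/s) powr rho"
        have q: "q > 0" unfolding q_def using tsx s by simp
        have "b t \<ge> b s * q" unfolding q_def using rho_ineq[of s t] s tsx tt0 by auto
        then have bq: "b t \<ge> r/2 * q" using s by simp
        have "(r/2 * q)^3 \<le> b t ^ 3" using bq q r by (intro power_mono) auto
        moreover have p1: "0 < (r/2 * q)^3" using q r by simp
        moreover have "0 < b t ^ 3" using bq p1 q r
          by (metis half_gt_zero mult_pos_pos order_less_le_trans zero_less_power)
        ultimately have "r^3 / b t ^ 3 \<le> r^3 / (r/2 * q)^3" using r
          by (intro divide_left_mono) auto
        also have "\<dots> = 8 / q^3" using r by (simp add: field_simps power_mult_distrib)
        also have "q^3 = (t/s) powr (3*rho)"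
        proof -
          have "q^3 = q powr (real 3)" using q by (simp add: powr_realpow)
          also have "\<dots> = (t/s) powr (rho * 3)" unfolding q_def by (simp add: powr_powr)
          finally show ?thesis by (simp add: mult.commute)
        qed
        also have "8 / (t/s) powr (3*rho) = 8 * (s/t) powr (3*rho)"
          using tsx s by (simp add: powr_divide divide_simps)
        finally have "r^3 / b t ^ 3 \<le> 8 * (s/t) powr (3*rho)" .
        moreover have "indicator {s..t0} t = (1::real)" using tsx tt0 by simp
        ultimately have A: "ennreal (r^3 / b t ^ 3) \<le> ennreal (8 * (s/t) powr (3*rho))"
          and ind: "indicator {s..t0} t = (1::real)" by (auto intro: ennreal_leI)
        have "ennreal (8 * (s/t) powr (3*rho)) = ennreal 8 * ennreal (indicator {s..t0} t * (s/t) powr (3*rho))"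
          unfolding ind by (simp add: ennreal_mult)
        with A have "ennreal (r^3 / b t ^ 3) \<le> ennreal 8 * ennreal (indicator {s..t0} t * (s/t) powr (3*rho))"
          by simp
        also have "\<dots> \<le> ennreal 8 * ennreal (indicator {s..t0} t * (s/t) powr (3*rho)) + ennreal (C2 * r^3) * indicator {0..1} t"
          by (rule add_increasing2) auto
        finally show ?thesis using True by simp
      next
        case tt0: False
        have "b t0 \<le> b t" using tt0 True t0 by (intro bmono) auto
        then have "b t0 ^ 3 \<le> b t ^ 3" using bt0 by (intro power_mono) auto
        moreover have p0: "0 < b t0 ^ 3" using bt0 by simp
        ultimately have "0 < b t ^ 3 * b t0 ^ 3" by (metis mult_pos_pos order_less_le_trans)
        with \<open>b t0 ^ 3 \<le> b t ^ 3\<close> have "r^3 / b t ^ 3 \<le> r^3 / b t0 ^ 3" using r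
          by (intro divide_left_mono) auto
        then have "r^3 / b t ^ 3 \<le> C2 * r^3" unfolding C2_def by simp
        then show ?thesis using True by (simp add: ennreal_leI add_increasing)
      qed
    qed auto
    have "(\<integral>\<^sup>+ t. indicator {0..1} t * ennreal (1 / b t ^ 3) * (if r \<le> b t then ennreal (r^3) else 0) \<partial>lborel)
        \<le> (\<integral>\<^sup>+ t. ennreal 8 * ennreal (indicator {s..t0} t * (s/t) powr (3*rho)) + ennreal (C2 * r^3) * indicator {0..1} t \<partial>lborel)"
      unfolding key by (intro nn_integral_mono pt)
    also have "\<dots> = ennreal 8 * (\<integral>\<^sup>+ t. ennreal (indicator {s..t0} t * (s/t) powr (3*rho)) \<partial>lborel)
                    + ennreal (C2 * r^3) * (\<integral>\<^sup>+ t. indicator {0..1::real} t \<partial>lborel)"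
      by (subst nn_integral_add) (auto simp: nn_integral_cmult)
    also have "\<dots> \<le> ennreal 8 * ennreal (s / (3*rho - 1)) + ennreal (C2 * r^3) * ennreal 1"
      using powr_tail_int[of s t0 "3*rho"] s False rho3
      by (intro add_mono mult_left_mono) auto
    also have "\<dots> = ennreal (8 * (s / (3*rho - 1))) + ennreal (C2 * r^3)"
    proof -
      have e1: "ennreal 8 * ennreal (s/(3*rho-1)) = ennreal (8 * (s/(3*rho-1)))"
        by (rule ennreal_mult[symmetric]) (use s rho3 in auto)
      show ?thesis by (simp only: e1 ennreal_1 mult_1_right)
    qed
    also have "\<dots> = ennreal (8 * (s / (3*rho - 1)) + C2 * r^3)"
      by (rule ennreal_plus[symmetric]) (use s rho3 C2_nn r in auto)
    also have "\<dots> \<le> ennreal (C1 * G r + C2 * r^3)"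
    proof (intro ennreal_leI add_right_mono)
      have "8 * (s / (3*rho - 1)) = (8 / (3*rho - 1)) * s" by simp
      also have "\<dots> \<le> C1 * G r" using C1_ge(1) s rho3 G_nn C1_nn
        by (intro mult_mono) auto
      finally show "8 * (s / (3*rho - 1)) \<le> C1 * G r" .
    qed
    finally show ?thesis .
  qed
qed

end
context L3 begin

lemma parta:
  "(\<integral>\<^sup>+ t\<in>{0..1}. ennreal (1 / b t ^ 3) *
      (\<integral>\<^sup>+ y\<in>{y. 0 < norm y \<and> norm y \<le> b t}. ennreal (norm y ^ 3) \<partial>M) \<partial>lborel) < \<infinity>"
proof -
  define F where "F t y = indicator {0..1} t * ennreal (1 / bb t ^ 3) *
      (if 0 < norm y \<and> norm y \<le> bb t then ennreal (norm y ^ 3) else 0)" for t :: real and y :: 'a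
  have measF: "(\<lambda>(t,y). F t y) \<in> borel_measurable (lborel \<Otimes>\<^sub>M M)" unfolding F_def by measurable
  have "(\<integral>\<^sup>+ t\<in>{0..1}. ennreal (1 / b t ^ 3) *
      (\<integral>\<^sup>+ y\<in>{y. 0 < norm y \<and> norm y \<le> b t}. ennreal (norm y ^ 3) \<partial>M) \<partial>lborel)
      = (\<integral>\<^sup>+ t. (\<integral>\<^sup>+ y. F t y \<partial>M) \<partial>lborel)"
  proof (intro nn_integral_cong)
    fix t :: real
    show "ennreal (1 / b t ^ 3) * (\<integral>\<^sup>+ y\<in>{y. 0 < norm y \<and> norm y \<le> b t}. ennreal (norm y ^ 3) \<partial>M) * indicator {0..1} t
        = (\<integral>\<^sup>+ y. F t y \<partial>M)"
    proof (cases "t \<in> {0..1}")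
      case True
      have "(\<integral>\<^sup>+ y. F t y \<partial>M) = (\<integral>\<^sup>+ y. ennreal (1 / b t ^ 3) * (ennreal (norm y ^ 3) * indicator {y. 0 < norm y \<and> norm y \<le> b t} y) \<partial>M)"
        using True by (intro nn_integral_cong) (auto simp: F_def bb_eq indicator_def)
      also have "\<dots> = ennreal (1 / b t ^ 3) * (\<integral>\<^sup>+ y. ennreal (norm y ^ 3) * indicator {y. 0 < norm y \<and> norm y \<le> b t} y \<partial>M)"
        by (intro nn_integral_cmult) measurable
      finally show ?thesis using True by simp
    qed (simp add: F_def)
  qed
  also have "\<dots> = (\<integral>\<^sup>+ y. (\<integral>\<^sup>+ t. F t y \<partial>lborel) \<partial>M)" by (rule tonelli[OF measF, symmetric])
  also have "\<dots> \<le> (\<integral>\<^sup>+ y. ennreal C1 * ennreal (G (norm y)) + ennreal C2 * ennreal (min 1 (norm y ^ 2)) \<partial>M)"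
  proof (intro nn_integral_mono)
    fix y :: 'a
    show "(\<integral>\<^sup>+ t. F t y \<partial>lborel) \<le> ennreal C1 * ennreal (G (norm y)) + ennreal C2 * ennreal (min 1 (norm y ^ 2))"
    proof (cases "0 < norm y \<and> norm y \<le> 1")
      case True
      define r where "r = norm y"
      have r: "0 < r" "r \<le> 1" using True unfolding r_def by auto
      have "(\<integral>\<^sup>+ t. F t y \<partial>lborel) = (\<integral>\<^sup>+ t. indicator {0..1} t * ennreal (1 / b t ^ 3) * (if r \<le> b t then ennreal (r^3) else 0) \<partial>lborel)"
        using r by (intro nn_integral_cong) (auto simp: F_def bb_eq indicator_def r_def)
      also have "\<dots> \<le> ennreal (C1 * G r + C2 * r^3)" by (rule parta_pt[OF r])
      also have "\<dots> \<le> ennreal (C1 * G r + C2 * min 1 (r^2))"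
      proof (intro ennreal_leI add_left_mono mult_left_mono C2_nn)
        have "r^3 \<le> r^2" using r by (simp add: power_decreasing)
        moreover have "r^2 \<le> 1" using r by (simp add: power_le_one)
        ultimately show "r^3 \<le> min 1 (r^2)" by simp
      qed
      also have "\<dots> = ennreal C1 * ennreal (G r) + ennreal C2 * ennreal (min 1 (r ^ 2))"
        using C1_nn C2_nn G_nn by (simp add: ennreal_plus ennreal_mult)
      finally show ?thesis unfolding r_def .
    next
      case False
      have "F t y = 0" for t
      proof (cases "t \<in> {0..1}")
        case True
        then show ?thesis using False bnn[of t] by (auto simp: F_def bb_eq)
      qed (simp add: F_def)
      then show ?thesis by simp
    qed
  qed
  also have "\<dots> = ennreal C1 * (\<integral>\<^sup>+ y. ennreal (G (norm y)) \<partial>M) + ennreal C2 * (\<integral>\<^sup>+ y. ennreal (min 1 (norm y ^ 2)) \<partial>M)"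
    by (subst nn_integral_add) (auto simp: nn_integral_cmult)
  also have "\<dots> < \<infinity>" using Gint Mfin by (simp add: ennreal_mult_less_top)
  finally show ?thesis .
qed

end
context L3 begin

lemma tb_lim: "((\<lambda>t. t / b t) \<longlongrightarrow> 0) (at_right 0)"
proof -
  have "((\<lambda>t. inverse (b t / t)) \<longlongrightarrow> 0) (at_right 0)"
    by (rule tendsto_inverse_0_at_top[OF b_lim])
  then show ?thesis by simp
qed

definition phi where "phi t y = t / b t * (indicator {y. b t < norm y \<and> norm y \<le> 1} y *\<^sub>R norm y)"

lemma partc_pt: "\<exists>\<eta>>0. \<exists>K\<ge>0. \<forall>t y. 0 < t \<and> t < \<eta> \<longrightarrow> norm (phi t y) \<le> K * G (norm y)"
proof -
  obtain \<delta> where d: "0 < \<delta>" "\<delta> < t0" "\<And>s t. 0 \<le> s \<Longrightarrow> s \<le> t \<Longrightarrow> t \<le> \<delta> \<Longrightarrow> b s / b t \<ge> (1 - 1/2) * s / t"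
    using cond_ii by (metis half_gt_zero zero_less_one)
  have "eventually (\<lambda>t. t / b t < 1) (at_right 0)"
    using tb_lim by (rule order_tendstoD) simp
  then obtain e where e: "e > 0" "\<And>t. 0 < t \<Longrightarrow> t < e \<Longrightarrow> t / b t < 1"
    unfolding eventually_at_right_field by auto
  define \<eta> where "\<eta> = min \<delta> e"
  define K where "K = max 4 (1/\<delta>)"
  have K: "K \<ge> 4" "K \<ge> 1/\<delta>" unfolding K_def by auto
  have "norm (phi t y) \<le> K * G (norm y)" if t: "0 < t" "t < \<eta>" for t y
  proof (cases "b t < norm y \<and> norm y \<le> 1")
    case False
    then show ?thesis using K G_nn by (simp add: phi_def)
  next
    case True
    define r where "r = norm y"
    have r: "0 < r" "r \<le> 1" "b t < r" using True bpos[of t] t d t0 unfolding r_def \<eta>_def by auto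
    have t1: "t \<le> 1" "t < \<delta>" "t < e" using t d t0 unfolding \<eta>_def by auto
    have bt: "b t > 0" using bpos t t1 by auto
    have tb: "t / b t < 1" using e t t1 by auto
    have phi: "norm (phi t y) = t / b t * r" using True bt t unfolding phi_def r_def by simp
    obtain s where s: "0 < s" "s \<le> 1" "b s = r/2" "s \<le> G r" using s_exists r by blast
    have Gt: "t \<le> G r" using G_lower[of t r] t t1 r by auto
    have "t / b t * r \<le> K * G r"
    proof (cases "s \<le> t")
      case True
      then have "b s \<le> b t" using s t t1 by (intro bmono) auto
      then have "r \<le> 2 * b t" using s by simp
      then have "t / b t * r \<le> t / b t * (2 * b t)" using t bt by (intro mult_left_mono) auto
      also have "\<dots> = 2 * t" using bt by simp
      also have "\<dots> \<le> K * G r" using K Gt t by (intro order_trans[OF _ mult_right_mono[of 2 K]]) auto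
      finally show ?thesis .
    next
      case False
      show ?thesis
      proof (cases "s \<le> \<delta>")
        case True
        have "b t / b s \<ge> (1 - 1/2) * t / s" using d(3)[of t s] False True t by auto
        moreover have bs: "b s > 0" using s r by simp
        ultimately have "t / b t \<le> 2 * s / b s" using bt s(1) t by (simp add: field_simps)
        then have "t / b t * r \<le> 2 * s / b s * r" using r by (intro mult_right_mono) auto
        also have "\<dots> = 4 * s" using s r by (simp add: field_simps)
        also have "\<dots> \<le> K * G r" using K s G_nn by (intro mult_mono) auto
        finally show ?thesis .
      next
        case False
        have "t / b t * r \<le> 1 * 1" using tb r t bt by (intro mult_mono) auto
        also have "\<dots> \<le> (1/\<delta>) * G r" using False s d by (simp add: field_simps)
        also have "\<dots> \<le> K * G r" using K G_nn by (intro mult_right_mono) auto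
        finally show ?thesis by simp
      qed
    qed
    then show ?thesis using phi unfolding r_def by simp
  qed
  moreover have "\<eta> > 0" using d e unfolding \<eta>_def by auto
  moreover have "K \<ge> 0" using K by simp
  ultimately show ?thesis by blast
qed

end
context L3 begin

lemma partc: "((\<lambda>t. t / b t * (\<integral>y\<in>{y. b t < norm y \<and> norm y \<le> 1}. norm y \<partial>M)) \<longlongrightarrow> 0) (at_right 0)"
proof -
  obtain \<eta> K :: real where eta: "\<eta> > 0" "K \<ge> 0" and bound: "\<And>t (y::'a). 0 < t \<Longrightarrow> t < \<eta> \<Longrightarrow> norm (phi t y) \<le> K * G (norm y)"
    using partc_pt by blast
  have eq: "t / b t * (\<integral>y\<in>{y. b t < norm y \<and> norm y \<le> 1}. norm y \<partial>M) = integral\<^sup>L M (phi t)" for t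
    unfolding phi_def set_lebesgue_integral_def by (rule integral_mult_right_zero[symmetric])
  have meas: "phi t \<in> borel_measurable M" for t unfolding phi_def by measurable
  have wint: "integrable M (\<lambda>y. K * G (norm y))"
  proof (rule integrableI_bounded)
    show "(\<lambda>y. K * G (norm y)) \<in> borel_measurable M" by measurable
    have "(\<integral>\<^sup>+ y. ennreal (norm (K * G (norm y))) \<partial>M) = (\<integral>\<^sup>+ y. ennreal K * ennreal (G (norm y)) \<partial>M)"
      using eta G_nn by (intro nn_integral_cong) (simp add: ennreal_mult abs_mult)
    also have "\<dots> = ennreal K * (\<integral>\<^sup>+ y. ennreal (G (norm y)) \<partial>M)" by (intro nn_integral_cmult) measurable
    also have "\<dots> < \<infinity>" using Gint by (simp add: ennreal_mult_less_top)
    finally show "(\<integral>\<^sup>+ y. ennreal (norm (K * G (norm y))) \<partial>M) < \<infinity>" .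
  qed
  have lim_pt: "((\<lambda>t. phi t y) \<longlongrightarrow> 0) (at_right 0)" for y
  proof (rule Lim_null_comparison)
    show "\<forall>\<^sub>F t in at_right 0. norm (phi t y) \<le> norm (t / b t) * norm y"
      by (intro always_eventually allI) (simp add: phi_def indicator_def abs_mult)
    show "((\<lambda>t. norm (t / b t) * norm y) \<longlongrightarrow> 0) (at_right 0)"
      using tendsto_mult[OF tendsto_norm[OF tb_lim] tendsto_const[of "norm y"]] by simp
  qed
  have ev: "\<forall>\<^sub>F t in at_right 0. AE y in M. norm (phi t y) \<le> K * G (norm y)"
    unfolding eventually_at_right_field
  proof (intro exI[of _ \<eta>] conjI allI impI AE_I2)
    fix t :: real and y :: 'a assume "0 < t" "t < \<eta>"
    then show "norm (phi t y) \<le> K * G (norm y)" by (rule bound)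
  qed (use eta in auto)
  have "((\<lambda>u. integral\<^sup>L M (phi (inverse u))) \<longlongrightarrow> integral\<^sup>L M (\<lambda>_. 0::real)) at_top"
  proof (rule integral_dominated_convergence_at_top[where w="\<lambda>y. K * G (norm y)"])
    show "AE y in M. ((\<lambda>u. phi (inverse u) y) \<longlongrightarrow> 0) at_top"
    proof (intro AE_I2)
      fix y show "((\<lambda>u. phi (inverse u) y) \<longlongrightarrow> 0) at_top"
        using lim_pt[of y] unfolding filterlim_at_right_to_top .
    qed
    show "\<forall>\<^sub>F u in at_top. AE y in M. norm (phi (inverse u) y) \<le> K * G (norm y)"
      using ev by (simp add: eventually_at_right_to_top)
  qed (use meas wint in auto)
  then have "((\<lambda>t. integral\<^sup>L M (phi t)) \<longlongrightarrow> 0) (at_right 0)"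
    by (simp add: filterlim_at_right_to_top)
  then show ?thesis unfolding eq .
qed

end

theorem lemma3p1:
  fixes M :: "'a::euclidean_space measure" and b :: "real \<Rightarrow> real" and t0 :: real
  assumes levy: "levy_measure M"
    and supp: "emeasure M {y. norm y > 1} = 0"
    and b_cont: "continuous_on {0..1} b"
    and b_range: "b ` {0..1} \<subseteq> {0..1}"
    and b_mono: "mono_on {0..1} b"
    and b_1: "b 1 = 1"
    and b_lim: "filterlim (\<lambda>t. b t / t) at_top (at_right 0)"
    and t0: "0 < t0" "t0 \<le> 1"
    and cond_i: "\<exists>\<rho>>1/3. mono_on {0<..t0} (\<lambda>t. b t / t powr \<rho>)"
    and cond_ii: "\<forall>\<epsilon>>0. \<exists>\<delta>. 0 < \<delta> \<and> \<delta> < t0 \<and>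
                    (\<forall>s t. 0 \<le> s \<and> s \<le> t \<and> t \<le> \<delta> \<longrightarrow> b s / b t \<ge> (1 - \<epsilon>) * s / t)"
    and int_fin: "(\<integral>\<^sup>+ t\<in>{0..1}. levy_tail M (b t) \<partial>lborel) < \<infinity>"
  shows "((\<integral>\<^sup>+ t\<in>{0..1}. ennreal (1 / b t ^ 3) *
            (\<integral>\<^sup>+ y\<in>{y. 0 < norm y \<and> norm y \<le> b t}. ennreal (norm y ^ 3) \<partial>M) \<partial>lborel) < \<infinity>) \<and>
         (\<forall>\<epsilon>. 0 < \<epsilon> \<and> \<epsilon> < 1 \<longrightarrow>
            (\<integral>\<^sup>+ t\<in>{0..1}. levy_tail M (\<epsilon> * b t) \<partial>lborel) < \<infinity>) \<and>
         ((\<lambda>t. t / b t * (\<integral>y\<in>{y. b t < norm y \<and> norm y \<le> 1}. norm y \<partial>M))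
            \<longlongrightarrow> 0) (at_right 0)"
proof -
  interpret L3 M b t0
    by (rule L3.intro) (rule levy supp b_cont b_range b_mono b_1 b_lim t0 cond_i cond_ii int_fin)+
  show ?thesis using parta partb partc by blast
qed

end
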